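(* Let $X$ be a continuum, let $n\geq 2$ be an integer, and let $f:X\to X$ be a map. Consider the statements: (1) $f$ is sensitive; (2) $F_n(f)$ is sensitive; (3) $SF_n(f)$ is sensitive. Then (3) implies (2), and (2) implies (1).
   Context: A continuum is a nonempty compact connected metric space $(X,d)$. For $n\in\mathbb{N}$, $F_n(X)$ is the set of nonempty subsets of $X$ with at most $n$ points, with the Hausdorff metric $d_H$; $F_1(X)=\{\{x\}:x\in X\}$. For $f:X\to X$, $F_n(f):F_n(X)\to F_n(X)$ is $F_n(f)(A)=f(A)$. For $n\geq 2$, $SF_n(X)$ is the quotient space $F_n(X)/F_1(X)$ (collapsing $F_1(X)$ to a point), $q:F_n(X)\to SF_n(X)$ the quotient map and $F_X=q(F_1(X))$. The induced map $SF_n(f):SF_n(X)\to SF_n(X)$ is $SF_n(f)(\chi)=q(F_n(f)(q^{-1}(\chi)))$ if $\chi\neq F_X$ and $SF_n(f)(F_X)=F_X$. $SF_n(X)$ carries the metric $\rho(\chi_1,\chi_2)=\mathcal{H}^2(F_1(X)\cup q^{-1}(\chi_1),F_1(X)\cup q^{-1}(\chi_2))$, where $\mathcal{H}^2$ is the Hausdorff metric on closed subsets of $F_n(X)$ induced by $d_H$. A map $g$ on a metric space $(Z,D)$ is sensitive if there is $\delta>0$ such that for every nonempty open $U\subseteq Z$ there exist $x,y\in U$ and $m\in\mathbb{N}$ with $D(g^m(x),g^m(y))>\delta$ (with $D=d,d_H,\rho$ for $f,F_n(f),SF_n(f)$ respectively). *)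

theory Defs
  imports "HOL-Analysis.Analysis"
begin

definition hausdorff_gen :: "('b \<Rightarrow> 'b \<Rightarrow> real) \<Rightarrow> 'b set \<Rightarrow> 'b set \<Rightarrow> real" where
  "hausdorff_gen D A B =
     max (SUP a\<in>A. INF b\<in>B. D a b) (SUP b\<in>B. INF a\<in>A. D a b)"

definition dH :: "'a::metric_space set \<Rightarrow> 'a set \<Rightarrow> real" where
  "dH = hausdorff_gen dist"

definition continuum :: "'a::metric_space set \<Rightarrow> bool" where
  "continuum X \<longleftrightarrow> X \<noteq> {} \<and> compact X \<and> connected X"

definition Fn :: "nat \<Rightarrow> 'a set \<Rightarrow> 'a set set" where
  "Fn n X = {A. A \<subseteq> X \<and> A \<noteq> {} \<and> finite A \<and> card A \<le> n}"

definition F1 :: "'a set \<Rightarrow> 'a set set" where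
  "F1 X = {{x} | x. x \<in> X}"

definition Fn_map :: "('a \<Rightarrow> 'a) \<Rightarrow> 'a set \<Rightarrow> 'a set" where
  "Fn_map f A = f ` A"

text \<open>Quotient map q : F_n(X) \<rightarrow> SF_n(X) = F_n(X)/F_1(X). A point of the quotient
  is represented by its fibre (equivalence class): F_1(X) itself (the point F_X),
  or a singleton {A} for A \<notin> F_1(X).\<close>
definition qmap :: "'a set \<Rightarrow> 'a set \<Rightarrow> 'a set set" where
  "qmap X A = (if A \<in> F1 X then F1 X else {A})"

definition SFn :: "nat \<Rightarrow> 'a set \<Rightarrow> 'a set set set" where
  "SFn n X = qmap X ` Fn n X"

definition FX :: "'a set \<Rightarrow> 'a set set" where
  "FX X = F1 X"

text \<open>Induced map SF_n(f); since points are represented by their fibres,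
  q^{-1}(chi) = chi.\<close>
definition SFn_map :: "'a set \<Rightarrow> ('a \<Rightarrow> 'a) \<Rightarrow> 'a set set \<Rightarrow> 'a set set" where
  "SFn_map X f chi =
     (if chi = FX X then FX X else qmap X (Fn_map f (the_elem chi)))"

definition rho :: "'a::metric_space set \<Rightarrow> 'a set set \<Rightarrow> 'a set set \<Rightarrow> real" where
  "rho X chi1 chi2 = hausdorff_gen dH (F1 X \<union> chi1) (F1 X \<union> chi2)"

definition open_in_metric :: "'b set \<Rightarrow> ('b \<Rightarrow> 'b \<Rightarrow> real) \<Rightarrow> 'b set \<Rightarrow> bool" where
  "open_in_metric Z D U \<longleftrightarrow> U \<subseteq> Z \<and> (\<forall>x\<in>U. \<exists>e>0. \<forall>y\<in>Z. D x y < e \<longrightarrow> y \<in> U)"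

definition sensitive :: "'b set \<Rightarrow> ('b \<Rightarrow> 'b \<Rightarrow> real) \<Rightarrow> ('b \<Rightarrow> 'b) \<Rightarrow> bool" where
  "sensitive Z D g \<longleftrightarrow>
     (\<exists>\<delta>>0. \<forall>U. open_in_metric Z D U \<and> U \<noteq> {} \<longrightarrow>
        (\<exists>x\<in>U. \<exists>y\<in>U. \<exists>m\<ge>1. D ((g ^^ m) x) ((g ^^ m) y) > \<delta>))"

end

theory Submission
  imports Defs
begin

lemma hg_bounds:
  assumes "A \<noteq> {}" "B \<noteq> {}" "\<And>a b. a\<in>A \<Longrightarrow> b\<in>B \<Longrightarrow> 0 \<le> D a b \<and> D a b \<le> K"
  shows "0 \<le> hausdorff_gen D A B \<and> hausdorff_gen D A B \<le> K"
proof -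
  have i1: "0 \<le> (INF b\<in>B. D a b) \<and> (INF b\<in>B. D a b) \<le> K" if "a \<in> A" for a
  proof -
    obtain b0 where "b0 \<in> B" using assms(2) by blast
    have bb: "bdd_below ((\<lambda>b. D a b) ` B)" by (rule bdd_belowI2[of _ 0]) (use assms(3) that in auto)
    show ?thesis
      using cINF_greatest[OF assms(2), of 0 "\<lambda>b. D a b"] cINF_lower2[OF bb \<open>b0\<in>B\<close>, of K]
        assms(3) that \<open>b0\<in>B\<close> by auto
  qed
  have i2: "0 \<le> (INF a\<in>A. D a b) \<and> (INF a\<in>A. D a b) \<le> K" if "b \<in> B" for b
  proof -
    obtain a0 where "a0 \<in> A" using assms(1) by blast
    have bb: "bdd_below ((\<lambda>a. D a b) ` A)" by (rule bdd_belowI2[of _ 0]) (use assms(3) that in auto)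
    show ?thesis
      using cINF_greatest[OF assms(1), of 0 "\<lambda>a. D a b"] cINF_lower2[OF bb \<open>a0\<in>A\<close>, of K]
        assms(3) that \<open>a0\<in>A\<close> by auto
  qed
  obtain a0 where a0: "a0 \<in> A" using assms(1) by blast
  obtain b0 where b0: "b0 \<in> B" using assms(2) by blast
  have s1: "0 \<le> (SUP a\<in>A. INF b\<in>B. D a b) \<and> (SUP a\<in>A. INF b\<in>B. D a b) \<le> K"
  proof -
    have ba: "bdd_above ((\<lambda>a. INF b\<in>B. D a b) ` A)" by (rule bdd_aboveI2[of _ _ K]) (use i1 in auto)
    show ?thesis using cSUP_upper2[OF ba a0, of 0] cSUP_least[OF assms(1), of "\<lambda>a. INF b\<in>B. D a b" K] i1 a0
      by auto
  qed
  have s2: "0 \<le> (SUP b\<in>B. INF a\<in>A. D a b) \<and> (SUP b\<in>B. INF a\<in>A. D a b) \<le> K"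
  proof -
    have ba: "bdd_above ((\<lambda>b. INF a\<in>A. D a b) ` B)" by (rule bdd_aboveI2[of _ _ K]) (use i2 in auto)
    show ?thesis using cSUP_upper2[OF ba b0, of 0] cSUP_least[OF assms(2), of "\<lambda>b. INF a\<in>A. D a b" K] i2 b0
      by auto
  qed
  show ?thesis using s1 s2 unfolding hausdorff_gen_def by auto
qed

lemma hg_lt:
  assumes "A \<noteq> {}" "B \<noteq> {}" "\<And>a b. a\<in>A \<Longrightarrow> b\<in>B \<Longrightarrow> 0 \<le> D a b \<and> D a b \<le> K"
    and "hausdorff_gen D A B < e"
  shows "\<And>a. a\<in>A \<Longrightarrow> \<exists>b\<in>B. D a b < e" and "\<And>b. b\<in>B \<Longrightarrow> \<exists>a\<in>A. D a b < e"
proof -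
  have i1: "0 \<le> (INF b\<in>B. D a b) \<and> (INF b\<in>B. D a b) \<le> K" if "a \<in> A" for a
  proof -
    obtain b0 where "b0 \<in> B" using assms(2) by blast
    have bb: "bdd_below ((\<lambda>b. D a b) ` B)" by (rule bdd_belowI2[of _ 0]) (use assms(3) that in auto)
    show ?thesis
      using cINF_greatest[OF assms(2), of 0 "\<lambda>b. D a b"] cINF_lower2[OF bb \<open>b0\<in>B\<close>, of K]
        assms(3) that \<open>b0\<in>B\<close> by auto
  qed
  have i2: "0 \<le> (INF a\<in>A. D a b) \<and> (INF a\<in>A. D a b) \<le> K" if "b \<in> B" for b
  proof -
    obtain a0 where "a0 \<in> A" using assms(1) by blast
    have bb: "bdd_below ((\<lambda>a. D a b) ` A)" by (rule bdd_belowI2[of _ 0]) (use assms(3) that in auto)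
    show ?thesis
      using cINF_greatest[OF assms(1), of 0 "\<lambda>a. D a b"] cINF_lower2[OF bb \<open>a0\<in>A\<close>, of K]
        assms(3) that \<open>a0\<in>A\<close> by auto
  qed
  fix a assume a: "a \<in> A"
  have bb: "bdd_below ((\<lambda>b. D a b) ` B)" by (rule bdd_belowI2[of _ 0]) (use assms(3) a in auto)
  have ba: "bdd_above ((\<lambda>a. INF b\<in>B. D a b) ` A)" by (rule bdd_aboveI2[of _ _ K]) (use i1 in auto)
  have "(INF b\<in>B. D a b) \<le> (SUP a\<in>A. INF b\<in>B. D a b)" by (rule cSUP_upper[OF a ba])
  also have "\<dots> < e" using assms(4) unfolding hausdorff_gen_def by auto
  finally show "\<exists>b\<in>B. D a b < e" using cINF_less_iff[OF assms(2) bb] by auto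
next
  have i2: "0 \<le> (INF a\<in>A. D a b) \<and> (INF a\<in>A. D a b) \<le> K" if "b \<in> B" for b
  proof -
    obtain a0 where "a0 \<in> A" using assms(1) by blast
    have bb: "bdd_below ((\<lambda>a. D a b) ` A)" by (rule bdd_belowI2[of _ 0]) (use assms(3) that in auto)
    show ?thesis
      using cINF_greatest[OF assms(1), of 0 "\<lambda>a. D a b"] cINF_lower2[OF bb \<open>a0\<in>A\<close>, of K]
        assms(3) that \<open>a0\<in>A\<close> by auto
  qed
  fix b assume b: "b \<in> B"
  have bb: "bdd_below ((\<lambda>a. D a b) ` A)" by (rule bdd_belowI2[of _ 0]) (use assms(3) b in auto)
  have ba: "bdd_above ((\<lambda>b. INF a\<in>A. D a b) ` B)" by (rule bdd_aboveI2[of _ _ K]) (use i2 in auto)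
  have "(INF a\<in>A. D a b) \<le> (SUP b\<in>B. INF a\<in>A. D a b)" by (rule cSUP_upper[OF b ba])
  also have "\<dots> < e" using assms(4) unfolding hausdorff_gen_def by auto
  finally show "\<exists>a\<in>A. D a b < e" using cINF_less_iff[OF assms(1) bb] by auto
qed

lemma hg_le:
  assumes "A \<noteq> {}" "B \<noteq> {}" "\<And>a b. a\<in>A \<Longrightarrow> b\<in>B \<Longrightarrow> 0 \<le> D a b"
    and "\<And>a. a\<in>A \<Longrightarrow> \<exists>b\<in>B. D a b \<le> c" and "\<And>b. b\<in>B \<Longrightarrow> \<exists>a\<in>A. D a b \<le> c"
  shows "hausdorff_gen D A B \<le> c"
proof -
  have "(INF b\<in>B. D a b) \<le> c" if a: "a \<in> A" for a
  proof -
    have bb: "bdd_below ((\<lambda>b. D a b) ` B)" by (rule bdd_belowI2[of _ 0]) (use assms(3) a in auto)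
    obtain b where "b \<in> B" "D a b \<le> c" using assms(4) a by blast
    then show ?thesis using cINF_lower2[OF bb] by blast
  qed
  then have 1: "(SUP a\<in>A. INF b\<in>B. D a b) \<le> c" by (intro cSUP_least assms(1))
  have "(INF a\<in>A. D a b) \<le> c" if b: "b \<in> B" for b
  proof -
    have bb: "bdd_below ((\<lambda>a. D a b) ` A)" by (rule bdd_belowI2[of _ 0]) (use assms(3) b in auto)
    obtain a where "a \<in> A" "D a b \<le> c" using assms(5) b by blast
    then show ?thesis using cINF_lower2[OF bb] by blast
  qed
  then have 2: "(SUP b\<in>B. INF a\<in>A. D a b) \<le> c" by (intro cSUP_least assms(2))
  show ?thesis using 1 2 unfolding hausdorff_gen_def by auto
qed

lemma iter_Fn: "(Fn_map f ^^ m) A = (f ^^ m) ` A"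
  by (induction m) (auto simp: Fn_map_def image_comp)

lemma iter_sub: "f ` X \<subseteq> X \<Longrightarrow> A \<subseteq> X \<Longrightarrow> (f ^^ m) ` A \<subseteq> X"
  by (induction m) auto

lemma SF_step:
  assumes "A \<noteq> {}" "A \<subseteq> X" "f ` X \<subseteq> X"
  shows "SFn_map X f (qmap X A) = qmap X (f ` A)"
proof (cases "A \<in> F1 X")
  case True
  then obtain x where x: "A = {x}" "x \<in> X" by (auto simp: F1_def)
  then have "f ` A \<in> F1 X" using assms(3) by (auto simp: F1_def)
  then show ?thesis using True by (simp add: SFn_map_def qmap_def FX_def)
next
  case False
  have "{A} \<noteq> F1 X" using False by auto
  then show ?thesis using False by (simp add: SFn_map_def qmap_def FX_def Fn_map_def)
qed

lemma iter_SF: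
  assumes "A \<noteq> {}" "A \<subseteq> X" "f ` X \<subseteq> X"
  shows "(SFn_map X f ^^ m) (qmap X A) = qmap X ((f ^^ m) ` A)"
proof (induction m)
  case 0 then show ?case by simp
next
  case (Suc m)
  have "(SFn_map X f ^^ Suc m) (qmap X A) = SFn_map X f (qmap X ((f ^^ m) ` A))"
    using Suc by simp
  also have "\<dots> = qmap X (f ` (f ^^ m) ` A)"
    by (rule SF_step) (use assms iter_sub[OF assms(3) assms(2)] in auto)
  finally show ?case by (simp add: image_comp)
qed

lemma dH_bounds:
  assumes "\<And>x y. x \<in> X \<Longrightarrow> y \<in> X \<Longrightarrow> dist x y \<le> K"
    and "C \<noteq> {}" "C \<subseteq> X" "D \<noteq> {}" "D \<subseteq> X"
  shows "0 \<le> dH C D \<and> dH C D \<le> K"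
  unfolding dH_def by (rule hg_bounds) (use assms in auto)

lemma rho_le:
  assumes K: "\<And>x y. x \<in> X \<Longrightarrow> y \<in> X \<Longrightarrow> dist x y \<le> K"
    and "C \<noteq> {}" "C \<subseteq> X" "D \<noteq> {}" "D \<subseteq> X"
  shows "rho X (qmap X C) (qmap X D) \<le> dH C D"
proof -
  let ?P = "\<lambda>E. E \<noteq> {} \<and> E \<subseteq> X"
  have F1P: "?P E" if "E \<in> F1 X" for E using that by (auto simp: F1_def)
  have qC: "E \<in> F1 X \<union> qmap X C \<Longrightarrow> E \<in> F1 X \<or> E = C" for E by (auto simp: qmap_def split: if_splits)
  have qD: "E \<in> F1 X \<union> qmap X D \<Longrightarrow> E \<in> F1 X \<or> E = D" for E by (auto simp: qmap_def split: if_splits)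
  have Cin: "C \<in> F1 X \<union> qmap X C" and Din: "D \<in> F1 X \<union> qmap X D" by (auto simp: qmap_def)
  have PC: "?P E" if "E \<in> F1 X \<union> qmap X C" for E using qC[OF that] F1P assms by auto
  have PD: "?P E" if "E \<in> F1 X \<union> qmap X D" for E using qD[OF that] F1P assms by auto
  have self: "dH E E \<le> dH C D" if "?P E" for E
  proof -
    have "dH E E \<le> 0" unfolding dH_def by (rule hg_le) (use that in auto)
    then show ?thesis using dH_bounds[OF K assms(2-5)] by linarith
  qed
  show ?thesis unfolding rho_def
  proof (rule hg_le)
    show "F1 X \<union> qmap X C \<noteq> {}" "F1 X \<union> qmap X D \<noteq> {}" using Cin Din by auto
    show "0 \<le> dH a b" if "a \<in> F1 X \<union> qmap X C" "b \<in> F1 X \<union> qmap X D" for a b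
    proof -
      have "?P a" "?P b" using PC[OF that(1)] PD[OF that(2)] by auto
      then show ?thesis using dH_bounds[of X K a b] K by blast
    qed
    show "\<exists>b\<in>F1 X \<union> qmap X D. dH a b \<le> dH C D" if "a \<in> F1 X \<union> qmap X C" for a
      using qC[OF that] self[OF PC[OF that]] Din by auto
    show "\<exists>a\<in>F1 X \<union> qmap X C. dH a b \<le> dH C D" if "b \<in> F1 X \<union> qmap X D" for b
      using qD[OF that] self[OF PD[OF that]] Cin by auto
  qed
qed

lemma Fn_D: "A \<in> Fn n X \<Longrightarrow> A \<noteq> {} \<and> A \<subseteq> X"
  by (auto simp: Fn_def)

lemma dist_bound:
  assumes "compact (X::'a::metric_space set)"
  obtains K where "\<And>x y. x \<in> X \<Longrightarrow> y \<in> X \<Longrightarrow> dist x y \<le> K"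
proof -
  obtain c e where ce: "\<forall>y\<in>X. dist c y \<le> e" using compact_imp_bounded[OF assms] unfolding bounded_def by blast
  have "dist x y \<le> 2 * e" if "x \<in> X" "y \<in> X" for x y
  proof -
    have "dist c x \<le> e" "dist c y \<le> e" using ce that by auto
    then show ?thesis using dist_triangle3[of x y c] by linarith
  qed
  then show ?thesis using that by blast
qed

lemma part2:
  fixes X :: "'a::metric_space set"
  assumes cpt: "compact X" and n: "n \<ge> 1"
    and sens: "sensitive (Fn n X) dH (Fn_map f)"
  shows "sensitive X dist f"
proof -
  obtain K where K: "\<And>x y. x \<in> X \<Longrightarrow> y \<in> X \<Longrightarrow> dist x y \<le> K" using dist_bound[OF cpt] by blast
  obtain \<delta> where d0: "\<delta> > 0" and H: "\<And>U. open_in_metric (Fn n X) dH U \<Longrightarrow> U \<noteq> {} \<Longrightarrow>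
        (\<exists>x\<in>U. \<exists>y\<in>U. \<exists>m\<ge>1. dH ((Fn_map f ^^ m) x) ((Fn_map f ^^ m) y) > \<delta>)"
    using sens unfolding sensitive_def by blast
  show ?thesis unfolding sensitive_def
  proof (intro exI[of _ \<delta>] conjI allI impI d0)
    fix U assume "open_in_metric X dist U \<and> U \<noteq> {}"
    then have UX: "U \<subseteq> X" and Uo: "\<forall>x\<in>U. \<exists>e>0. \<forall>y\<in>X. dist x y < e \<longrightarrow> y \<in> U" and Une: "U \<noteq> {}"
      unfolding open_in_metric_def by auto
    obtain ee where ee: "\<And>x. x \<in> U \<Longrightarrow> ee x > 0 \<and> (\<forall>y\<in>X. dist x y < ee x \<longrightarrow> y \<in> U)"
      using Uo by metis
    define V where "V = {A \<in> Fn n X. A \<subseteq> U}"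
    have Vo: "open_in_metric (Fn n X) dH V"
      unfolding open_in_metric_def
    proof (intro conjI ballI)
      show "V \<subseteq> Fn n X" by (auto simp: V_def)
      fix A assume A: "A \<in> V"
      then have Af: "finite A" "A \<noteq> {}" "A \<subseteq> U" "A \<subseteq> X" by (auto simp: V_def Fn_def)
      define e where "e = Min (ee ` A)"
      have e0: "e > 0" unfolding e_def using Af ee by (subst Min_gr_iff) auto
      have ele: "e \<le> ee a" if "a \<in> A" for a unfolding e_def using Af that by auto
      have "\<forall>B\<in>Fn n X. dH A B < e \<longrightarrow> B \<in> V"
      proof (intro ballI impI)
        fix B assume B: "B \<in> Fn n X" "dH A B < e"
        have BX: "B \<noteq> {}" "B \<subseteq> X" using Fn_D[OF B(1)] by auto
        have "b \<in> U" if b: "b \<in> B" for b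
        proof -
          obtain a where a: "a \<in> A" "dist a b < e"
          proof -
            have "hausdorff_gen dist A B < e" using B(2) unfolding dH_def .
            moreover have "\<And>a b. a\<in>A \<Longrightarrow> b\<in>B \<Longrightarrow> 0 \<le> dist a b \<and> dist a b \<le> K"
              using K Af(4) BX(2) by auto
            ultimately show ?thesis using hg_lt(2)[of A B dist K e b] Af(2) BX(1) b that by blast
          qed
          have "a \<in> U" using a(1) Af(3) by blast
          then have "\<forall>y\<in>X. dist a y < ee a \<longrightarrow> y \<in> U" using ee by blast
          moreover have "dist a b < ee a" using a ele[OF a(1)] by linarith
          ultimately show ?thesis using BX b by blast
        qed
        then show "B \<in> V" using B(1) by (auto simp: V_def)
      qed
      then show "\<exists>e>0. \<forall>y\<in>Fn n X. dH A y < e \<longrightarrow> y \<in> V" using e0 by blast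
    qed
    obtain x0 where x0: "x0 \<in> U" using Une by blast
    have "{x0} \<in> V" using x0 UX n by (auto simp: V_def Fn_def)
    then obtain A B m where AB: "A \<in> V" "B \<in> V" "m \<ge> 1"
        and gt: "dH ((Fn_map f ^^ m) A) ((Fn_map f ^^ m) B) > \<delta>"
      using H[OF Vo] by blast
    have Af: "A \<noteq> {}" "A \<subseteq> U" "B \<noteq> {}" "B \<subseteq> U" using AB by (auto simp: V_def Fn_def)
    have "\<exists>a\<in>A. \<exists>b\<in>B. dist ((f^^m) a) ((f^^m) b) > \<delta>"
    proof (rule ccontr)
      assume "\<not> ?thesis"
      then have all: "\<And>a b. a \<in> A \<Longrightarrow> b \<in> B \<Longrightarrow> dist ((f^^m) a) ((f^^m) b) \<le> \<delta>" by force
      have "dH ((f^^m) ` A) ((f^^m) ` B) \<le> \<delta>" unfolding dH_def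
        by (rule hg_le) (use Af all in auto)
      then show False using gt by (simp add: iter_Fn)
    qed
    then show "\<exists>x\<in>U. \<exists>y\<in>U. \<exists>m\<ge>1. dist ((f ^^ m) x) ((f ^^ m) y) > \<delta>"
      using Af AB(3) by blast
  qed
qed

lemma part1:
  fixes X :: "'a::metric_space set"
  assumes cont: "continuum X" and n: "n \<ge> 2" and fX: "f ` X \<subseteq> X"
    and sens: "sensitive (SFn n X) (rho X) (SFn_map X f)"
  shows "sensitive (Fn n X) dH (Fn_map f)"
proof -
  have cpt: "compact X" and conn: "connected X" and Xne: "X \<noteq> {}" using cont by (auto simp: continuum_def)
  obtain K where K: "\<And>x y. x \<in> X \<Longrightarrow> y \<in> X \<Longrightarrow> dist x y \<le> K" using dist_bound[OF cpt] by blast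
  obtain \<delta> where d0: "\<delta> > 0" and H: "\<And>U. open_in_metric (SFn n X) (rho X) U \<Longrightarrow> U \<noteq> {} \<Longrightarrow>
        (\<exists>x\<in>U. \<exists>y\<in>U. \<exists>m\<ge>1. rho X ((SFn_map X f ^^ m) x) ((SFn_map X f ^^ m) y) > \<delta>)"
    using sens unfolding sensitive_def by blast
  have key: "dH ((f^^m) ` A) ((f^^m) ` B) > \<delta>"
    if "A \<in> Fn n X" "B \<in> Fn n X" "rho X ((SFn_map X f ^^ m) (qmap X A)) ((SFn_map X f ^^ m) (qmap X B)) > \<delta>"
    for A B m
  proof -
    have A: "A \<noteq> {}" "A \<subseteq> X" and B: "B \<noteq> {}" "B \<subseteq> X" using Fn_D that by auto
    have "rho X (qmap X ((f^^m) ` A)) (qmap X ((f^^m) ` B)) \<le> dH ((f^^m) ` A) ((f^^m) ` B)"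
      by (rule rho_le[OF K]) (use A B iter_sub[OF fX] in auto)
    then show ?thesis using that(3) iter_SF[OF A fX] iter_SF[OF B fX] by simp
  qed
  show ?thesis
  proof (cases "\<exists>x\<in>X. \<exists>y\<in>X. x \<noteq> y")
    case False
    obtain x0 where x0: "x0 \<in> X" using Xne by blast
    have X0: "X = {x0}" using False x0 by blast
    have o: "open_in_metric (SFn n X) (rho X) (SFn n X)"
      unfolding open_in_metric_def by (auto intro: exI[of _ 1])
    have "{x0} \<in> Fn n X" using x0 n by (auto simp: Fn_def)
    then have "SFn n X \<noteq> {}" by (auto simp: SFn_def)
    then obtain c1 c2 m where c: "c1 \<in> SFn n X" "c2 \<in> SFn n X"
      "rho X ((SFn_map X f ^^ m) c1) ((SFn_map X f ^^ m) c2) > \<delta>"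
      using H[OF o] by blast
    obtain A B where AB: "A \<in> Fn n X" "B \<in> Fn n X" "c1 = qmap X A" "c2 = qmap X B"
      using c(1,2) by (auto simp: SFn_def)
    have gt: "dH ((f^^m) ` A) ((f^^m) ` B) > \<delta>" using key[OF AB(1,2)] c(3) AB(3,4) by simp
    have A: "A \<noteq> {}" "A \<subseteq> X" and B: "B \<noteq> {}" "B \<subseteq> X" using Fn_D AB by auto
    have s: "(f^^m) ` A = {x0}" "(f^^m) ` B = {x0}" using iter_sub[OF fX A(2), of m] iter_sub[OF fX B(2), of m] A(1) B(1) X0
      by auto
    have "dH {x0} {x0} \<le> 0" unfolding dH_def by (rule hg_le) auto
    then show ?thesis using gt s d0 by simp
  next
    case True
    then obtain x1 x2 where x12: "x1 \<in> X" "x2 \<in> X" "x1 \<noteq> x2" by blast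
    have nsing: "\<And>z. X \<noteq> {z}" using x12 by blast
    show ?thesis unfolding sensitive_def
    proof (intro exI[of _ \<delta>] conjI allI impI d0)
      fix U assume "open_in_metric (Fn n X) dH U \<and> U \<noteq> {}"
      then have UF: "U \<subseteq> Fn n X" and Uo: "\<forall>A\<in>U. \<exists>e>0. \<forall>B\<in>Fn n X. dH A B < e \<longrightarrow> B \<in> U"
        and Une: "U \<noteq> {}"
        unfolding open_in_metric_def by auto
      have ex: "\<exists>A\<in>U. A \<notin> F1 X"
      proof -
        obtain A0 where A0: "A0 \<in> U" using Une by blast
        show ?thesis
        proof (cases "A0 \<in> F1 X")
          case False then show ?thesis using A0 by blast
        next
          case True
          then obtain x where x: "A0 = {x}" "x \<in> X" by (auto simp: F1_def)
          obtain e where e: "e > 0" "\<forall>B\<in>Fn n X. dH A0 B < e \<longrightarrow> B \<in> U" using Uo A0 by blast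
          have "x islimpt X" by (rule connected_imp_perfect[OF conn x(2) nsing])
          then obtain y where y: "y \<in> X" "y \<noteq> x" "dist y x < e"
            using e(1) unfolding islimpt_approachable by blast
          have Bin: "{x, y} \<in> Fn n X" using x y n by (auto simp: Fn_def card_insert_if)
          have "dH {x} {x, y} \<le> dist x y" unfolding dH_def
            by (rule hg_le) auto
          then have "{x, y} \<in> U" using e(2) Bin x(1) y(3) by (simp add: dist_commute)
          moreover have "{x, y} \<notin> F1 X" using y(2) by (auto simp: F1_def doubleton_eq_iff)
          ultimately show ?thesis by blast
        qed
      qed
      define V where "V = qmap X ` (U - F1 X)"
      have Vo: "open_in_metric (SFn n X) (rho X) V"
        unfolding open_in_metric_def
      proof (intro conjI ballI)
        show "V \<subseteq> SFn n X" using UF by (auto simp: V_def SFn_def)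
        fix c assume "c \<in> V"
        then obtain A where A: "A \<in> U" "A \<notin> F1 X" "c = {A}" by (auto simp: V_def qmap_def)
        have AX: "A \<noteq> {}" "A \<subseteq> X" using Fn_D A(1) UF by auto
        obtain a1 a2 where a12: "a1 \<in> A" "a2 \<in> A" "a1 \<noteq> a2"
        proof -
          obtain a where a: "a \<in> A" using AX by blast
          have "A \<noteq> {a}" using A(2) a AX(2) by (auto simp: F1_def)
          then obtain b where "b \<in> A" "b \<noteq> a" using a by blast
          then show ?thesis using that a by blast
        qed
        obtain eU where eU: "eU > 0" "\<forall>B\<in>Fn n X. dH A B < eU \<longrightarrow> B \<in> U" using Uo A(1) by blast
        define e where "e = min eU (dist a1 a2 / 2)"
        have e0: "e > 0" using eU a12 by (simp add: e_def)
        have "\<forall>p\<in>SFn n X. rho X c p < e \<longrightarrow> p \<in> V"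
        proof (intro ballI impI)
          fix p assume p: "p \<in> SFn n X" "rho X c p < e"
          obtain B where B: "B \<in> Fn n X" "p = qmap X B" using p(1) by (auto simp: SFn_def)
          have BX: "B \<noteq> {}" "B \<subseteq> X" using Fn_D B(1) by auto
          let ?P = "\<lambda>E. E \<noteq> {} \<and> E \<subseteq> X"
          have F1P: "?P E" if "E \<in> F1 X" for E using that by (auto simp: F1_def)
          have P1: "?P E" if "E \<in> F1 X \<union> c" for E using that F1P A(3) AX by auto
          have P2: "?P E" if "E \<in> F1 X \<union> p" for E using that F1P B(2) BX by (auto simp: qmap_def split: if_splits)
          have bnd: "0 \<le> dH a b \<and> dH a b \<le> K" if "a \<in> F1 X \<union> c" "b \<in> F1 X \<union> p" for a b
          proof -
            have "?P a" "?P b" using P1[OF that(1)] P2[OF that(2)] by auto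
            then show ?thesis using dH_bounds[of X K a b] K by blast
          qed
          have hlt: "hausdorff_gen dH (F1 X \<union> c) (F1 X \<union> p) < e" using p(2) unfolding rho_def .
          have "p \<noteq> {}" using B(2) by (auto simp: qmap_def)
          then have ne2: "F1 X \<union> p \<noteq> {}" by blast
          obtain b where b: "b \<in> F1 X \<union> p" "dH A b < e"
            using hg_lt(1)[OF _ ne2 bnd hlt, of A] A(3) by blast
          have bF: "b \<notin> F1 X"
          proof
            assume "b \<in> F1 X"
            then obtain x where x: "b = {x}" "x \<in> X" by (auto simp: F1_def)
            have hh: "hausdorff_gen dist A {x} < e" using b(2) x(1) unfolding dH_def by simp
            have dd: "\<And>a b'. a\<in>A \<Longrightarrow> b'\<in>{x} \<Longrightarrow> 0 \<le> dist a b' \<and> dist a b' \<le> K"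
              using K AX x by auto
            have "dist a1 x < e" using hg_lt(1)[OF AX(1) _ dd hh a12(1)] by auto
            moreover have "dist a2 x < e" using hg_lt(1)[OF AX(1) _ dd hh a12(2)] by auto
            moreover have "dist a1 a2 \<le> dist a1 x + dist a2 x" using dist_triangle[of a1 a2 x] by (simp add: dist_commute)
            ultimately show False unfolding e_def by linarith
          qed
          then have "b \<in> p" using b(1) by blast
          have BF: "B \<notin> F1 X"
          proof
            assume "B \<in> F1 X"
            then have "p = F1 X" using B(2) by (simp add: qmap_def)
            then show False using bF \<open>b \<in> p\<close> by blast
          qed
          then have "p = {B}" using B(2) by (simp add: qmap_def)
          then have "b = B" using \<open>b \<in> p\<close> by blast
          then have "B \<in> U" using eU(2) B(1) b(2) e_def by auto
          then show "p \<in> V" using BF B(2) by (auto simp: V_def)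
        qed
        then show "\<exists>e>0. \<forall>y\<in>SFn n X. rho X c y < e \<longrightarrow> y \<in> V" using e0 by blast
      qed
      have "V \<noteq> {}" using ex by (auto simp: V_def)
      then obtain c1 c2 m where c: "c1 \<in> V" "c2 \<in> V" "m \<ge> 1"
        "rho X ((SFn_map X f ^^ m) c1) ((SFn_map X f ^^ m) c2) > \<delta>"
        using H[OF Vo] by blast
      obtain A B where AB: "A \<in> U" "B \<in> U" "c1 = qmap X A" "c2 = qmap X B"
        using c(1,2) by (auto simp: V_def)
      have "dH ((f^^m) ` A) ((f^^m) ` B) > \<delta>" using key[of A B m] AB UF c(4) by auto
      then show "\<exists>x\<in>U. \<exists>y\<in>U. \<exists>m\<ge>1. dH ((Fn_map f ^^ m) x) ((Fn_map f ^^ m) y) > \<delta>"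
        using AB c(3) by (auto simp: iter_Fn)
    qed
  qed
qed

theorem theorem1:
  fixes X :: "'a::metric_space set" and f :: "'a \<Rightarrow> 'a" and n :: nat
  assumes "continuum X" and "n \<ge> 2"
    and "continuous_on X f" and "f ` X \<subseteq> X"
  shows "(sensitive (SFn n X) (rho X) (SFn_map X f) \<longrightarrow> sensitive (Fn n X) dH (Fn_map f))
       \<and> (sensitive (Fn n X) dH (Fn_map f) \<longrightarrow> sensitive X dist f)"
  using part1[OF assms(1,2,4)] part2[of X n f] assms(1,2) by (auto simp: continuum_def)

end
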